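(* Let $(E,j)$ be a soft inductive system of Banach spaces whose connecting maps are asymptotically isometric, i.e. $$\lim_{n\gg m}\lambda_{nm}=1,\qquad \lambda_{nm}:=\inf_{x_m\in E_m,\ \|x_m\|=1}\|j_{nm}x_m\|.$$ Then a uniformly bounded net $x_\bullet$ is $j$-convergent if and only if $\lim_n j_{\infty n}x_n$ exists in $E_\infty$; in that case $j\text{-}\lim_nx_n=\lim_n j_{\infty n}x_n$.
   Context: Let $(N,\le)$ be a directed set; $\lim_{n\gg m}a_{nm}:=\lim_m\limsup_n a_{nm}$. A soft inductive system $(E,j)$: Banach spaces $E_n$, linear contractions $j_{nm}:E_m\to E_n$ ($n\ge m$), $j_{nn}=\mathrm{id}$, $j_{nm}=0$ if $n\not\ge m$, with $\lim_{n\gg m}\|(j_{nl}-j_{nm}j_{ml})x_l\|=0$ for all $l,x_l$. Nets $x_\bullet=(x_n)$, $x_n\in E_n$; seminorm $|x_\bullet|=\limsup_n\|x_n\|$ on uniformly bounded nets. Basic nets: $j_{\bullet m}x_m=(j_{nm}x_m)_n$. $C(E,j)$ ($j$-convergent nets): seminorm closure of basic nets; $C_0(E,j)$: nets with $\|x_n\|\to0$. $E_\infty:=C(E,j)/C_0(E,j)$ with norm $\|x_\infty\|=|x_\bullet|$, $x_\infty=j\text{-}\lim_nx_n$ the class of $x_\bullet$; $j_{\infty m}x_m:=j\text{-}\lim_nj_{nm}x_m$. *)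

theory Defs
  imports "HOL-Analysis.Analysis"
begin

definition dirtop :: "('i::preorder) filter" where
  "dirtop = (INF k. principal {k..})"

text \<open>lim_{n>>m} a_{nm} = L  means  lim_m limsup_n a_{nm} = L (values in ereal).\<close>
definition limgg :: "('i::preorder \<Rightarrow> 'i \<Rightarrow> ereal) \<Rightarrow> ereal \<Rightarrow> bool" where
  "limgg a L \<longleftrightarrow> ((\<lambda>m. Limsup dirtop (\<lambda>n. a n m)) \<longlongrightarrow> L) dirtop"

text \<open>The Banach spaces E_n are realised as closed linear subspaces of one ambient
  Banach space; j n m is the connecting map E_m -> E_n (only values on E m matter).\<close>
definition soft_inductive_system ::
  "('i::preorder \<Rightarrow> 'a::banach set) \<Rightarrow> ('i \<Rightarrow> 'i \<Rightarrow> 'a \<Rightarrow> 'a) \<Rightarrow> bool" where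
  "soft_inductive_system E j \<longleftrightarrow>
     (\<forall>n. subspace (E n) \<and> closed (E n)) \<and>
     (\<forall>n m. \<forall>x\<in>E m. j n m x \<in> E n) \<and>
     (\<forall>n m. \<forall>x\<in>E m. \<forall>y\<in>E m. j n m (x + y) = j n m x + j n m y) \<and>
     (\<forall>n m c. \<forall>x\<in>E m. j n m (c *\<^sub>R x) = c *\<^sub>R j n m x) \<and>
     (\<forall>n m. \<forall>x\<in>E m. norm (j n m x) \<le> norm x) \<and>
     (\<forall>n. \<forall>x\<in>E n. j n n x = x) \<and>
     (\<forall>n m. \<not> m \<le> n \<longrightarrow> (\<forall>x\<in>E m. j n m x = 0)) \<and>
     (\<forall>l. \<forall>x\<in>E l. limgg (\<lambda>n m. ereal (norm (j n l x - j n m (j m l x)))) 0)"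

text \<open>lambda_{nm} = inf over unit vectors x_m of E_m of ||j_{nm} x_m|| (inf of empty set = +inf).\<close>
definition lam :: "('i::preorder \<Rightarrow> 'a::banach set) \<Rightarrow> ('i \<Rightarrow> 'i \<Rightarrow> 'a \<Rightarrow> 'a) \<Rightarrow> 'i \<Rightarrow> 'i \<Rightarrow> ereal" where
  "lam E j n m = Inf {ereal (norm (j n m x)) | x. x \<in> E m \<and> norm x = 1}"

definition unif_bounded_net :: "('i \<Rightarrow> 'a set) \<Rightarrow> ('i \<Rightarrow> 'a::real_normed_vector) \<Rightarrow> bool" where
  "unif_bounded_net E x \<longleftrightarrow> (\<forall>n. x n \<in> E n) \<and> (\<exists>B. \<forall>n. norm (x n) \<le> B)"

definition snorm :: "('i::preorder \<Rightarrow> 'a::real_normed_vector) \<Rightarrow> ereal" where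
  "snorm x = Limsup dirtop (\<lambda>n. ereal (norm (x n)))"

definition basic_net :: "('i \<Rightarrow> 'i \<Rightarrow> 'a \<Rightarrow> 'a) \<Rightarrow> 'i \<Rightarrow> 'a \<Rightarrow> 'i \<Rightarrow> 'a" where
  "basic_net j m y = (\<lambda>n. j n m y)"

text \<open>C(E,j): seminorm closure of the basic nets within the uniformly bounded nets.\<close>
definition jconv :: "('i::preorder \<Rightarrow> 'a::banach set) \<Rightarrow> ('i \<Rightarrow> 'i \<Rightarrow> 'a \<Rightarrow> 'a) \<Rightarrow> ('i \<Rightarrow> 'a) \<Rightarrow> bool" where
  "jconv E j x \<longleftrightarrow> unif_bounded_net E x \<and>
     (\<forall>e>0. \<exists>m. \<exists>y\<in>E m. snorm (x - basic_net j m y) < ereal e)"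

definition null_net :: "('i::preorder \<Rightarrow> 'a set) \<Rightarrow> ('i \<Rightarrow> 'a::real_normed_vector) \<Rightarrow> bool" where
  "null_net E x \<longleftrightarrow> unif_bounded_net E x \<and> ((\<lambda>n. norm (x n)) \<longlongrightarrow> 0) dirtop"

text \<open>j-lim_n x_n: the class of x in E_infinity = C(E,j)/C_0(E,j).\<close>
definition jclass :: "('i::preorder \<Rightarrow> 'a::banach set) \<Rightarrow> ('i \<Rightarrow> 'i \<Rightarrow> 'a \<Rightarrow> 'a) \<Rightarrow> ('i \<Rightarrow> 'a) \<Rightarrow> ('i \<Rightarrow> 'a) set" where
  "jclass E j x = {y. jconv E j y \<and> null_net E (x - y)}"

definition Einf :: "('i::preorder \<Rightarrow> 'a::banach set) \<Rightarrow> ('i \<Rightarrow> 'i \<Rightarrow> 'a \<Rightarrow> 'a) \<Rightarrow> ('i \<Rightarrow> 'a) set set" where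
  "Einf E j = jclass E j ` {x. jconv E j x}"

text \<open>Distance in E_infinity: ||X - Y|| = |x - y| for representatives x of X, y of Y.\<close>
definition dist_inf :: "('i::preorder \<Rightarrow> 'a::real_normed_vector) set \<Rightarrow> ('i \<Rightarrow> 'a) set \<Rightarrow> ereal" where
  "dist_inf X Y = snorm ((SOME x. x \<in> X) - (SOME y. y \<in> Y))"

definition jinf :: "('i::preorder \<Rightarrow> 'a::banach set) \<Rightarrow> ('i \<Rightarrow> 'i \<Rightarrow> 'a \<Rightarrow> 'a) \<Rightarrow> 'i \<Rightarrow> 'a \<Rightarrow> ('i \<Rightarrow> 'a) set" where
  "jinf E j m y = jclass E j (basic_net j m y)"

end

theory Submission
  imports Defs
begin


lemma ev_dirtop:
  assumes directed: "\<forall>a b::'i::preorder. \<exists>c. a \<le> c \<and> b \<le> c"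
  shows "eventually P (dirtop::'i filter) \<longleftrightarrow> (\<exists>k. \<forall>n\<ge>k. P n)"
  unfolding dirtop_def
proof (subst eventually_INF_base)
  show "(UNIV::'i set) \<noteq> {}" by simp
  fix a b :: 'i assume "a \<in> UNIV" "b \<in> UNIV"
  then obtain c where "a \<le> c" "b \<le> c" using directed by blast
  then show "\<exists>x\<in>UNIV. principal {x..} \<le> inf (principal {a..}) (principal {b..})"
    by (intro bexI[of _ c]) (auto intro: order_trans)
qed (auto simp: eventually_principal)

lemma dirtop_nbot:
  assumes directed: "\<forall>a b::'i::preorder. \<exists>c. a \<le> c \<and> b \<le> c"
  shows "(dirtop::'i filter) \<noteq> bot"
proof
  assume "(dirtop::'i filter) = bot"
  then have "eventually (\<lambda>_. False) (dirtop::'i filter)" by simp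
  then show False using ev_dirtop[OF directed] by auto
qed

lemma ev_ge:
  assumes directed: "\<forall>a b::'i::preorder. \<exists>c. a \<le> c \<and> b \<le> c"
  shows "eventually (\<lambda>n. m \<le> n) (dirtop::'i filter)"
  using ev_dirtop[OF directed] by auto

lemma snorm_lessD: "snorm f < ereal e \<Longrightarrow> eventually (\<lambda>k. norm (f k) < e) dirtop"
  unfolding snorm_def by (drule Limsup_lessD) simp

lemma snorm_leI: "eventually (\<lambda>k. norm (f k) \<le> e) dirtop \<Longrightarrow> snorm f \<le> ereal e"
  unfolding snorm_def by (rule Limsup_bounded) simp

lemma snorm_nonneg:
  assumes directed: "\<forall>a b::'i::preorder. \<exists>c. a \<le> c \<and> b \<le> c"
  shows "0 \<le> snorm (f::'i \<Rightarrow> 'a::real_normed_vector)"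
  unfolding snorm_def by (rule le_Limsup[OF dirtop_nbot[OF directed]]) simp

lemma ereal_tendsto0I:
  assumes "\<And>n. 0 \<le> g n" "\<And>e. e > 0 \<Longrightarrow> eventually (\<lambda>n. g n < ereal e) F"
  shows "(g \<longlongrightarrow> (0::ereal)) F"
proof (subst order_tendsto_iff, intro conjI allI impI)
  fix l :: ereal assume "l < 0" then show "eventually (\<lambda>n. l < g n) F"
    by (intro always_eventually allI order.strict_trans2[OF _ assms(1)])
next
  fix u :: ereal assume "0 < u"
  then obtain e where "0 < e" "ereal e < u"
    by (metis dual_order.strict_trans ereal_dense2 ereal_less(2))
  then show "eventually (\<lambda>n. g n < u) F"
    using assms(2)[of e] by (auto elim: eventually_mono)
qed

lemma ereal_tendsto0D:
  assumes "(g \<longlongrightarrow> (0::ereal)) F" and "e > 0"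
  shows "eventually (\<lambda>n. g n < ereal e) F"
  using assms by (subst (asm) order_tendsto_iff) auto

lemma tri: assumes "eventually (\<lambda>k. norm (a k - b k) < e1) F" "eventually (\<lambda>k. norm (b k - c k) < e2) F"
   shows "eventually (\<lambda>k. norm (a k - (c k::'a::real_normed_vector)) < e1 + e2) F"
  using eventually_conj[OF assms] by (rule eventually_mono) (auto intro: norm_diff_triangle_less)

lemma null_ev: "null_net E f \<Longrightarrow> e > 0 \<Longrightarrow> eventually (\<lambda>k. norm (f k) < e) dirtop"
  unfolding null_net_def by (auto simp: order_tendsto_iff)

context
  fixes E :: "'i::preorder \<Rightarrow> 'a::banach set" and j :: "'i \<Rightarrow> 'i \<Rightarrow> 'a \<Rightarrow> 'a"
  assumes directed: "\<forall>a b::'i. \<exists>c. a \<le> c \<and> b \<le> c"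
    and soft: "soft_inductive_system E j"
begin

lemma jin: "x \<in> E m \<Longrightarrow> j n m x \<in> E n"
  using soft unfolding soft_inductive_system_def by auto

lemma jnorm: "x \<in> E m \<Longrightarrow> norm (j n m x) \<le> norm x"
  using soft unfolding soft_inductive_system_def by auto

lemma jscale: "x \<in> E m \<Longrightarrow> j n m (c *\<^sub>R x) = c *\<^sub>R j n m x"
  using soft unfolding soft_inductive_system_def by auto

lemma Esub: "subspace (E n)"
  using soft unfolding soft_inductive_system_def by auto

lemma jdiff: "x \<in> E m \<Longrightarrow> y \<in> E m \<Longrightarrow> j n m (x - y) = j n m x - j n m y"
proof -
  assume x: "x \<in> E m" and y: "y \<in> E m"
  have my: "(-1) *\<^sub>R y \<in> E m" using Esub y by (simp add: subspace_neg)
  have add: "\<forall>x\<in>E m. \<forall>y\<in>E m. j n m (x + y) = j n m x + j n m y"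
    using soft unfolding soft_inductive_system_def by auto
  have "j n m (x + (-1) *\<^sub>R y) = j n m x + j n m ((-1) *\<^sub>R y)"
    using add x my by blast
  also have "\<dots> = j n m x - j n m y" using jscale[OF y, of n "-1"] by simp
  finally show ?thesis by simp
qed

lemma zeroE: "0 \<in> E n" using Esub subspace_0 by blast

lemma diffE: "x \<in> E n \<Longrightarrow> y \<in> E n \<Longrightarrow> x - y \<in> E n" using Esub subspace_diff by blast

lemma soft_ev:
  assumes "y \<in> E l" "e > 0"
  shows "eventually (\<lambda>m. eventually (\<lambda>n. norm (j n l y - j n m (j m l y)) < e) dirtop) dirtop"
proof -
  have "limgg (\<lambda>n m. ereal (norm (j n l y - j n m (j m l y)))) 0"
    using soft assms unfolding soft_inductive_system_def by auto
  then have "eventually (\<lambda>m. Limsup dirtop (\<lambda>n. ereal (norm (j n l y - j n m (j m l y)))) < ereal e) dirtop"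
    unfolding limgg_def using assms(2) by (subst (asm) order_tendsto_iff) auto
  then show ?thesis by (rule eventually_mono) (drule Limsup_lessD, simp)
qed

lemma basic_jconv: "y \<in> E m \<Longrightarrow> jconv E j (basic_net j m y)"
proof -
  assume y: "y \<in> E m"
  have 1: "\<forall>n. basic_net j m y n \<in> E n" using y jin by (simp add: basic_net_def)
  have 2: "\<forall>n. norm (basic_net j m y n) \<le> norm y" using y jnorm by (simp add: basic_net_def)
  have 3: "snorm (basic_net j m y - basic_net j m y) < ereal e" if "e > 0" for e
  proof -
    have "snorm (basic_net j m y - basic_net j m y) \<le> ereal 0"
      by (rule snorm_leI) simp
    with \<open>e > 0\<close> show ?thesis
      by (metis ereal_less(2) order.strict_trans1 zero_ereal_def)
  qed
  show ?thesis unfolding jconv_def unif_bounded_net_def using 1 2 3 y by blast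
qed

lemma self_class: "jconv E j a \<Longrightarrow> a \<in> jclass E j a"
  unfolding jclass_def null_net_def unif_bounded_net_def by (auto simp: zeroE)

lemma rep:
  assumes "jconv E j a"
  obtains r where "(SOME x. x \<in> jclass E j a) = r" "jconv E j r"
    "\<And>e. e > 0 \<Longrightarrow> eventually (\<lambda>k. norm (a k - r k) < e) dirtop"
proof -
  have "(SOME x. x \<in> jclass E j a) \<in> jclass E j a" using self_class[OF assms] by (rule someI[of "\<lambda>x. x \<in> jclass E j a"])
  then show ?thesis using that null_ev unfolding jclass_def by (auto simp: fun_diff_def)
qed

lemma D1:
  assumes a: "jconv E j a" and b: "jconv E j b" and e: "e > 0"
    and ev: "eventually (\<lambda>k. norm (a k - b k) < e) dirtop"
  shows "dist_inf (jclass E j a) (jclass E j b) \<le> ereal (2 * e)"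
proof -
  obtain r where r: "(SOME x. x \<in> jclass E j a) = r"
    "\<And>e. e > 0 \<Longrightarrow> eventually (\<lambda>k. norm (a k - r k) < e) dirtop" using rep[OF a] by blast
  obtain s where s: "(SOME x. x \<in> jclass E j b) = s"
    "\<And>e. e > 0 \<Longrightarrow> eventually (\<lambda>k. norm (b k - s k) < e) dirtop" using rep[OF b] by blast
  have 1: "eventually (\<lambda>k. norm (r k - a k) < e/2) dirtop"
    using r(2)[of "e/2"] e by (auto simp: norm_minus_commute)
  have "eventually (\<lambda>k. norm (r k - s k) < e/2 + e + e/2) dirtop"
    using tri[OF tri[OF 1 ev] s(2)[of "e/2"]] e by simp
  then have "snorm (r - s) \<le> ereal (2*e)"
    by (intro snorm_leI) (auto elim: eventually_mono simp: fun_diff_def)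
  then show ?thesis unfolding dist_inf_def r(1) s(1) .
qed

lemma D2:
  assumes a: "jconv E j a" and b: "jconv E j b" and e: "e > 0"
    and d: "dist_inf (jclass E j a) (jclass E j b) < ereal e"
  shows "eventually (\<lambda>k. norm (a k - b k) < 2 * e) dirtop"
proof -
  obtain r where r: "(SOME x. x \<in> jclass E j a) = r"
    "\<And>e. e > 0 \<Longrightarrow> eventually (\<lambda>k. norm (a k - r k) < e) dirtop" using rep[OF a] by blast
  obtain s where s: "(SOME x. x \<in> jclass E j b) = s"
    "\<And>e. e > 0 \<Longrightarrow> eventually (\<lambda>k. norm (b k - s k) < e) dirtop" using rep[OF b] by blast
  have "eventually (\<lambda>k. norm ((r - s) k) < e) dirtop"
    using d unfolding dist_inf_def r(1) s(1) by (rule snorm_lessD)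
  then have 1: "eventually (\<lambda>k. norm (r k - s k) < e) dirtop" by (simp add: fun_diff_def)
  have 2: "eventually (\<lambda>k. norm (s k - b k) < e/2) dirtop"
    using s(2)[of "e/2"] e by (auto simp: norm_minus_commute)
  have "eventually (\<lambda>k. norm (a k - b k) < e/2 + e + e/2) dirtop"
    using tri[OF tri[OF r(2)[of "e/2"] 1] 2] e by simp
  then show ?thesis by simp
qed

lemma iso_ev:
  assumes asym: "limgg (lam E j) 1"
  shows "eventually (\<lambda>k. \<forall>u\<in>E k. \<forall>c. eventually (\<lambda>l. norm (j l k u) < c) dirtop \<longrightarrow> norm u \<le> 2*c) dirtop"
proof -
  have "eventually (\<lambda>k. ereal (1/2) < Limsup dirtop (\<lambda>n. lam E j n k)) dirtop"
    using asym unfolding limgg_def by (subst (asm) order_tendsto_iff) auto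
  then show ?thesis
  proof (rule eventually_mono, intro ballI allI impI)
    fix k u c
    assume L: "ereal (1/2) < Limsup dirtop (\<lambda>n. lam E j n k)" and u: "u \<in> E k"
      and ev: "eventually (\<lambda>l. norm (j l k u) < c) dirtop"
    show "norm u \<le> 2 * c"
    proof (rule ccontr)
      assume "\<not> norm u \<le> 2 * c"
      then have big: "2 * c < norm u" by simp
      have c0: "0 < c"
      proof -
        obtain l where "norm (j l k u) < c"
          using eventually_happens[OF ev] dirtop_nbot[OF directed] by auto
        then show ?thesis by (meson norm_ge_zero order.strict_trans1)
      qed
      then have un: "norm u > 0" using big by linarith
      define v where "v = (1 / norm u) *\<^sub>R u"
      have v: "v \<in> E k" "norm v = 1" using u un Esub unfolding v_def
        by (auto simp: subspace_scale)
      have "eventually (\<lambda>n. lam E j n k \<le> ereal (1/2)) dirtop"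
        using ev
      proof (rule eventually_mono)
        fix l assume l: "norm (j l k u) < c"
        have "lam E j l k \<le> ereal (norm (j l k v))"
          unfolding lam_def using v by (intro Inf_lower) blast
        also have "norm (j l k v) = norm (j l k u) / norm u"
          unfolding v_def using jscale[OF u] un by simp
        also have "\<dots> \<le> 1/2" using l big un by (simp add: divide_simps)
        finally show "lam E j l k \<le> ereal (1/2)" by simp
      qed
      then have "Limsup dirtop (\<lambda>n. lam E j n k) \<le> ereal (1/2)" by (rule Limsup_bounded)
      with L show False by simp
    qed
  qed
qed

lemma jconv_ev:
  assumes "jconv E j x" "e > 0"
  obtains m y where "y \<in> E m" "eventually (\<lambda>k. norm (x k - j k m y) < e) dirtop"
proof -
  obtain m y where "y \<in> E m" "snorm (x - basic_net j m y) < ereal e"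
    using assms unfolding jconv_def by blast
  then show ?thesis using that snorm_lessD[of "x - basic_net j m y" e]
    by (auto simp: fun_diff_def basic_net_def)
qed

lemma fwd:
  assumes ub: "unif_bounded_net E x" and xc: "jconv E j x"
  shows "((\<lambda>n. dist_inf (jinf E j n (x n)) (jclass E j x)) \<longlongrightarrow> 0) dirtop"
proof (rule ereal_tendsto0I)
  fix n show "0 \<le> dist_inf (jinf E j n (x n)) (jclass E j x)"
    unfolding dist_inf_def by (rule snorm_nonneg[OF directed])
next
  fix \<epsilon> :: real assume \<epsilon>: "\<epsilon> > 0"
  define d where "d = \<epsilon> / 8"
  have d: "d > 0" using \<epsilon> by (simp add: d_def)
  have xE: "\<And>n. x n \<in> E n" using ub unfolding unif_bounded_net_def by blast
  obtain m y where y: "y \<in> E m" and A: "eventually (\<lambda>k. norm (x k - j k m y) < d) dirtop"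
    using jconv_ev[OF xc d] by blast
  have B: "eventually (\<lambda>n. eventually (\<lambda>k. norm (j k m y - j k n (j n m y)) < d) dirtop) dirtop"
    using soft_ev[OF y d] .
  have "eventually (\<lambda>n. eventually (\<lambda>k. norm (j k n (x n) - x k) < 3 * d) dirtop) dirtop"
    using eventually_conj[OF A B]
  proof (rule eventually_mono)
    fix n assume n: "norm (x n - j n m y) < d \<and> eventually (\<lambda>k. norm (j k m y - j k n (j n m y)) < d) dirtop"
    have 1: "eventually (\<lambda>k. norm (j k n (x n) - j k n (j n m y)) < d) dirtop"
    proof (rule always_eventually, rule allI)
      fix k
      have "norm (j k n (x n) - j k n (j n m y)) = norm (j k n (x n - j n m y))"
        using jdiff[OF xE jin[OF y]] by simp
      also have "\<dots> \<le> norm (x n - j n m y)" by (rule jnorm[OF diffE[OF xE jin[OF y]]])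
      finally show "norm (j k n (x n) - j k n (j n m y)) < d" using n by simp
    qed
    have 2: "eventually (\<lambda>k. norm (j k n (j n m y) - j k m y) < d) dirtop"
      using n by (auto elim: eventually_mono simp: norm_minus_commute)
    have 3: "eventually (\<lambda>k. norm (j k m y - x k) < d) dirtop"
      using A by (auto elim: eventually_mono simp: norm_minus_commute)
    have "eventually (\<lambda>k. norm (j k n (x n) - x k) < d + d + d) dirtop"
      by (rule tri[OF tri[OF 1 2] 3])
    then show "eventually (\<lambda>k. norm (j k n (x n) - x k) < 3 * d) dirtop" by simp
  qed
  then show "eventually (\<lambda>n. dist_inf (jinf E j n (x n)) (jclass E j x) < ereal \<epsilon>) dirtop"
  proof (rule eventually_mono)
    fix n assume "eventually (\<lambda>k. norm (j k n (x n) - x k) < 3 * d) dirtop"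
    then have "dist_inf (jclass E j (basic_net j n (x n))) (jclass E j x) \<le> ereal (2 * (3 * d))"
      using d by (intro D1 basic_jconv xE xc) (auto simp: basic_net_def)
    also have "\<dots> < ereal \<epsilon>" using \<epsilon> by (simp add: d_def)
    finally show "dist_inf (jinf E j n (x n)) (jclass E j x) < ereal \<epsilon>" by (simp add: jinf_def)
  qed
qed

lemma bwd:
  assumes asym: "limgg (lam E j) 1" and ub: "unif_bounded_net E x"
    and z: "jconv E j z"
    and H0: "((\<lambda>n. dist_inf (jinf E j n (x n)) (jclass E j z)) \<longlongrightarrow> 0) dirtop"
  shows "jconv E j x"
proof -
  have xE: "\<And>n. x n \<in> E n" using ub unfolding unif_bounded_net_def by blast
  have null: "eventually (\<lambda>k. norm (x k - z k) < \<delta>) dirtop" if \<delta>: "\<delta> > 0" for \<delta>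
  proof -
    define d where "d = \<delta> / 8"
    have d: "d > 0" using \<delta> by (simp add: d_def)
    obtain m w where w: "w \<in> E m" and Z: "eventually (\<lambda>k. norm (z k - j k m w) < d) dirtop"
      using jconv_ev[OF z d] by blast
    have H: "eventually (\<lambda>k. eventually (\<lambda>l. norm (j l k (x k) - z l) < d) dirtop) dirtop"
      using ereal_tendsto0D[OF H0 half_gt_zero[OF d]]
    proof (rule eventually_mono)
      fix k assume "dist_inf (jinf E j k (x k)) (jclass E j z) < ereal (d/2)"
      then have "eventually (\<lambda>l. norm (basic_net j k (x k) l - z l) < 2 * (d/2)) dirtop"
        using d by (intro D2 basic_jconv xE z) (auto simp: jinf_def)
      then show "eventually (\<lambda>l. norm (j l k (x k) - z l) < d) dirtop" by (simp add: basic_net_def)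
    qed
    have S: "eventually (\<lambda>k. eventually (\<lambda>l. norm (j l m w - j l k (j k m w)) < d) dirtop) dirtop"
      using soft_ev[OF w d] .
    have I: "eventually (\<lambda>k. \<forall>u\<in>E k. \<forall>c. eventually (\<lambda>l. norm (j l k u) < c) dirtop \<longrightarrow> norm u \<le> 2*c) dirtop"
      using iso_ev[OF asym] .
    show ?thesis
      using eventually_conj[OF Z eventually_conj[OF H eventually_conj[OF S I]]]
    proof (rule eventually_mono, elim conjE)
      fix k
      assume Zk: "norm (z k - j k m w) < d"
        and Hk: "eventually (\<lambda>l. norm (j l k (x k) - z l) < d) dirtop"
        and Sk: "eventually (\<lambda>l. norm (j l m w - j l k (j k m w)) < d) dirtop"
        and Ik: "\<forall>u\<in>E k. \<forall>c. eventually (\<lambda>l. norm (j l k u) < c) dirtop \<longrightarrow> norm u \<le> 2*c"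
      define u where "u = x k - j k m w"
      have uE: "u \<in> E k" unfolding u_def by (rule diffE[OF xE jin[OF w]])
      have "eventually (\<lambda>l. norm (j l k (x k) - j l k (j k m w)) < d + d + d) dirtop"
        by (rule tri[OF tri[OF Hk Z] Sk])
      then have "eventually (\<lambda>l. norm (j l k u) < 3 * d) dirtop"
        unfolding u_def using jdiff[OF xE jin[OF w]] by simp
      then have "norm u \<le> 2 * (3 * d)" by (rule Ik[rule_format, OF uE])
      moreover have "norm (x k - z k) \<le> norm u + norm (z k - j k m w)"
      proof -
        have "x k - z k = u + (j k m w - z k)" by (simp add: u_def)
        then have "norm (x k - z k) \<le> norm u + norm (j k m w - z k)" by (metis norm_triangle_ineq)
        then show ?thesis by (simp add: norm_minus_commute)
      qed
      ultimately show "norm (x k - z k) < \<delta>" using Zk \<delta> unfolding d_def by linarith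
    qed
  qed
  have "snorm (x - basic_net j m w) < ereal e" if e: "e > 0" "w \<in> E m"
     "eventually (\<lambda>k. norm (z k - j k m w) < e/2) dirtop" for e m w
  proof -
    have "eventually (\<lambda>k. norm (x k - j k m w) < e/4 + e/2) dirtop"
      using tri[OF null[OF divide_pos_pos[OF e(1), of 4]] e(3)] by simp
    then have "snorm (x - basic_net j m w) \<le> ereal (3*e/4)"
      by (intro snorm_leI) (auto elim: eventually_mono simp: fun_diff_def basic_net_def)
    also have "\<dots> < ereal e" using e by simp
    finally show ?thesis .
  qed
  note key = this
  show ?thesis unfolding jconv_def
  proof (intro conjI allI impI)
    show "unif_bounded_net E x" by (rule ub)
    fix e :: real assume e: "e > 0"
    obtain m w where "w \<in> E m" "eventually (\<lambda>k. norm (z k - j k m w) < e/2) dirtop"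
      using jconv_ev[OF z half_gt_zero[OF e]] by blast
    with key[OF e] show "\<exists>m. \<exists>y\<in>E m. snorm (x - basic_net j m y) < ereal e" by blast
  qed
qed

end


theorem mainTheorem4:
  fixes E :: "'i::preorder \<Rightarrow> 'a::banach set"
    and j :: "'i \<Rightarrow> 'i \<Rightarrow> 'a \<Rightarrow> 'a"
    and x :: "'i \<Rightarrow> 'a"
  assumes directed: "\<forall>a b::'i. \<exists>c. a \<le> c \<and> b \<le> c"
    and soft: "soft_inductive_system E j"
    and asym_iso: "limgg (lam E j) 1"
    and ub: "unif_bounded_net E x"
  shows "(jconv E j x \<longleftrightarrow>
           (\<exists>L\<in>Einf E j. ((\<lambda>n. dist_inf (jinf E j n (x n)) L) \<longlongrightarrow> 0) dirtop))
       \<and> (jconv E j x \<longrightarrow>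
           ((\<lambda>n. dist_inf (jinf E j n (x n)) (jclass E j x)) \<longlongrightarrow> 0) dirtop)"
proof (intro conjI iffI impI)
  assume xc: "jconv E j x"
  show "((\<lambda>n. dist_inf (jinf E j n (x n)) (jclass E j x)) \<longlongrightarrow> 0) dirtop"
    by (rule fwd[OF directed soft ub xc])
  then show "\<exists>L\<in>Einf E j. ((\<lambda>n. dist_inf (jinf E j n (x n)) L) \<longlongrightarrow> 0) dirtop"
    using xc unfolding Einf_def by blast
next
  assume "\<exists>L\<in>Einf E j. ((\<lambda>n. dist_inf (jinf E j n (x n)) L) \<longlongrightarrow> 0) dirtop"
  then obtain z where z: "jconv E j z"
    and H: "((\<lambda>n. dist_inf (jinf E j n (x n)) (jclass E j z)) \<longlongrightarrow> 0) dirtop"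
    unfolding Einf_def by blast
  show "jconv E j x" by (rule bwd[OF directed soft asym_iso ub z H])
qed

end
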